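(* Let $\mathsf{B}$ be Berwald's metric on $\mathbb{B}^n_1(\mathbf{0})$, $$\mathsf{B}(x,y)=\frac{\big(\sqrt{(1-|x|^2)|y|^2+\langle x,y\rangle^2}+\langle x,y\rangle\big)^2}{(1-|x|^2)^2\sqrt{(1-|x|^2)|y|^2+\langle x,y\rangle^2}},$$ and let $\mathsf{B}^*=\mathsf{B}^*(x,\xi)$ be its co-metric. Set $a^{ij}=(1-|x|^2)^3(\delta^{ij}-x^ix^j)$, $b^i=(1-|x|^2)^2x^i$, $\alpha^{*2}=a^{ij}\xi_i\xi_j$ and $\beta^*=b^i\xi_i$. Then $\mathsf{B}^*$ satisfies $$\begin{aligned}&16|x|^2(1-|x|^2)^2\big\{(1-|x|^2)\alpha^{*2}+\beta^{*2}\big\}\mathsf{B}^{*4}+8\big\{(10|x|^2-1)(1-|x|^2)\alpha^{*2}\beta^*+(9|x|^2-1)\beta^{*3}\big\}\mathsf{B}^{*3}\\&+\big\{(1-20|x|^2-8|x|^4)\alpha^{*4}+6(6|x|^2-5)\alpha^{*2}\beta^{*2}-27\beta^{*4}\big\}\mathsf{B}^{*2}+12\alpha^{*4}\beta^*\mathsf{B}^*-\alpha^{*6}=0.\end{aligned}$$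
   Context: The co-metric of a Finsler metric $F$ is $F^*(x,\xi)=\sup_{y\in T_xM\setminus\{0\}}\xi(y)/F(x,y)$ for $\xi=\xi_idx^i\in T^*_xM$. *)

theory Defs
  imports "HOL-Analysis.Analysis"
begin

definition berwald :: "real^'n \<Rightarrow> real^'n \<Rightarrow> real" where
  "berwald x y =
     (let r = sqrt ((1 - (norm x)\<^sup>2) * (norm y)\<^sup>2 + (x \<bullet> y)\<^sup>2)
      in (r + x \<bullet> y)\<^sup>2 / ((1 - (norm x)\<^sup>2)\<^sup>2 * r))"

text \<open>Co-metric: F*(x,xi) = sup over nonzero y of xi(y)/F(x,y). A covector xi = xi_i dx^i
  is represented by its coefficient vector, so xi(y) = xi \<bullet> y.\<close>
definition co_metric :: "(real^'n \<Rightarrow> real^'n \<Rightarrow> real) \<Rightarrow> real^'n \<Rightarrow> real^'n \<Rightarrow> real" where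
  "co_metric F x \<xi> = (SUP y \<in> UNIV - {0}. (\<xi> \<bullet> y) / F x y)"

definition berwald_a :: "real^'n \<Rightarrow> 'n \<Rightarrow> 'n \<Rightarrow> real" where
  "berwald_a x i j = (1 - (norm x)\<^sup>2)^3 * ((if i = j then 1 else 0) - x$i * x$j)"

definition berwald_b :: "real^'n \<Rightarrow> 'n \<Rightarrow> real" where
  "berwald_b x i = (1 - (norm x)\<^sup>2)^2 * x$i"

definition alpha_star_sq :: "real^'n \<Rightarrow> real^'n \<Rightarrow> real" where
  "alpha_star_sq x \<xi> = (\<Sum>i\<in>UNIV. \<Sum>j\<in>UNIV. berwald_a x i j * \<xi>$i * \<xi>$j)"

definition beta_star :: "real^'n \<Rightarrow> real^'n \<Rightarrow> real" where
  "beta_star x \<xi> = (\<Sum>i\<in>UNIV. berwald_b x i * \<xi>$i)"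

end

theory Submission
  imports Defs
begin


lemma alpha_eq: "alpha_star_sq x \<xi> = (1 - (norm x)\<^sup>2)^3 * (\<xi> \<bullet> \<xi> - (x \<bullet> \<xi>)^2)"
proof -
  define k where "k = (1 - (norm x)\<^sup>2)^3"
  have e: "berwald_a x i j * \<xi>$i * \<xi>$j = (if i = j then k * (\<xi>$i * \<xi>$j) else 0) - k * (x$i*\<xi>$i) * (x$j*\<xi>$j)" for i j
    unfolding berwald_a_def k_def by (simp add: algebra_simps)
  have s: "(\<Sum>j\<in>UNIV. berwald_a x i j * \<xi>$i * \<xi>$j) = k * (\<xi>$i * \<xi>$i) - (k * (x \<bullet> \<xi>)) * (x$i*\<xi>$i)" for i
  proof -
    have "(\<Sum>j\<in>UNIV. berwald_a x i j * \<xi>$i * \<xi>$j) = (\<Sum>j\<in>UNIV. (if i = j then k * (\<xi>$i * \<xi>$j) else 0)) - (\<Sum>j\<in>UNIV. k * (x$i*\<xi>$i) * (x$j*\<xi>$j))"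
      unfolding e by (rule sum_subtractf)
    also have "\<dots> = k * (\<xi>$i * \<xi>$i) - (k * (x \<bullet> \<xi>)) * (x$i*\<xi>$i)"
      unfolding inner_vec_def by (simp add: sum_distrib_left algebra_simps)
    finally show ?thesis .
  qed
  have "alpha_star_sq x \<xi> = k * (\<Sum>i\<in>UNIV. \<xi>$i * \<xi>$i) - (k * (x \<bullet> \<xi>)) * (\<Sum>i\<in>UNIV. x$i*\<xi>$i)"
    unfolding alpha_star_sq_def s by (simp only: sum_subtractf sum_distrib_left[symmetric])
  also have "\<dots> = k * (\<xi> \<bullet> \<xi> - (x \<bullet> \<xi>)^2)"
    unfolding inner_vec_def by (simp add: algebra_simps power2_eq_square)
  finally show ?thesis unfolding k_def .
qed

lemma beta_eq: "beta_star x \<xi> = (1 - (norm x)\<^sup>2)^2 * (x \<bullet> \<xi>)"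
  unfolding beta_star_def berwald_b_def inner_vec_def by (simp add: sum_distrib_left mult.assoc)

lemma r_gt:
  fixes x y :: "real^'n"
  assumes "norm x < 1" "y \<noteq> 0"
  shows "sqrt ((1 - (norm x)\<^sup>2) * (norm y)\<^sup>2 + (x \<bullet> y)\<^sup>2) > \<bar>x \<bullet> y\<bar>"
proof -
  have "(1 - (norm x)\<^sup>2) > 0" using assms(1) by (simp add: abs_square_less_1)
  moreover have "(norm y)\<^sup>2 > 0" using assms(2) by simp
  ultimately have "(1 - (norm x)\<^sup>2) * (norm y)\<^sup>2 + (x \<bullet> y)\<^sup>2 > \<bar>x \<bullet> y\<bar>^2" by simp
  then show ?thesis by (metis abs_ge_zero real_less_rsqrt)
qed

lemma berwald_pos:
  fixes x y :: "real^'n"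
  assumes "norm x < 1" "y \<noteq> 0"
  shows "berwald x y > 0"
proof -
  let ?r = "sqrt ((1 - (norm x)\<^sup>2) * (norm y)\<^sup>2 + (x \<bullet> y)\<^sup>2)"
  have r: "?r > \<bar>x \<bullet> y\<bar>" by (rule r_gt[OF assms])
  have c: "(1 - (norm x)\<^sup>2) > 0" using assms(1) by (simp add: abs_square_less_1)
  have "?r + x \<bullet> y > 0" using r by linarith
  moreover have "?r > 0" using r by linarith
  ultimately show ?thesis unfolding berwald_def Let_def using c by simp
qed

lemma radicand_pos:
  fixes x y :: "real^'n"
  assumes "norm x < 1" "y \<noteq> 0"
  shows "(1 - (norm x)\<^sup>2) * (norm y)\<^sup>2 + (x \<bullet> y)\<^sup>2 > 0"
proof -
  have "(1 - (norm x)\<^sup>2) > 0" using assms(1) by (simp add: abs_square_less_1)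
  moreover have "(norm y)\<^sup>2 > 0" using assms(2) by simp
  ultimately show ?thesis by (simp add: add_pos_nonneg)
qed

lemma berwald_homog:
  fixes x y :: "real^'n"
  assumes "t > 0"
  shows "berwald x (t *\<^sub>R y) = t * berwald x y"
proof -
  define R where "R = sqrt ((1 - (norm x)\<^sup>2) * (norm y)\<^sup>2 + (x \<bullet> y)\<^sup>2)"
  define c where "c = 1 - (norm x)\<^sup>2"
  have "(1 - (norm x)\<^sup>2) * (norm (t *\<^sub>R y))\<^sup>2 + (x \<bullet> (t *\<^sub>R y))\<^sup>2
      = t^2 * ((1 - (norm x)\<^sup>2) * (norm y)\<^sup>2 + (x \<bullet> y)\<^sup>2)"
    using assms by (simp add: power_mult_distrib algebra_simps)
  then have 1: "sqrt ((1 - (norm x)\<^sup>2) * (norm (t *\<^sub>R y))\<^sup>2 + (x \<bullet> (t *\<^sub>R y))\<^sup>2) = t * R"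
    using assms unfolding R_def by (simp add: real_sqrt_mult)
  have 2: "x \<bullet> (t *\<^sub>R y) = t * (x \<bullet> y)" by simp
  have 3: "(t * R + t * (x \<bullet> y))\<^sup>2 / (c\<^sup>2 * (t * R)) = t * ((R + x \<bullet> y)\<^sup>2 / (c\<^sup>2 * R))"
  proof (cases "R = 0 \<or> c = 0")
    case True then show ?thesis by auto
  next
    case False then show ?thesis using assms by (simp add: field_simps power2_eq_square)
  qed
  show ?thesis unfolding berwald_def Let_def 2 1[unfolded 2] using 3 unfolding R_def c_def .
qed

lemma berwald_cont:
  fixes x :: "real^'n"
  assumes "norm x < 1" "0 \<notin> S"
  shows "continuous_on S (berwald x)"
proof -
  have key: "(1 - (norm x)\<^sup>2)\<^sup>2 * sqrt ((1 - (norm x)\<^sup>2) * (norm y)\<^sup>2 + (x \<bullet> y)\<^sup>2) \<noteq> 0"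
    if "y \<in> S" for y
  proof -
    have y: "y \<noteq> 0" using assms that by auto
    have "(1 - (norm x)\<^sup>2) > 0" using assms(1) by (simp add: abs_square_less_1)
    moreover have "sqrt ((1 - (norm x)\<^sup>2) * (norm y)\<^sup>2 + (x \<bullet> y)\<^sup>2) > 0"
      using radicand_pos[OF assms(1) y] by simp
    ultimately show ?thesis by simp
  qed
  show ?thesis unfolding berwald_def Let_def
    by (intro continuous_intros) (use key in auto)
qed



lemma berwald_deriv:
  fixes x y v :: "real^'n"
  assumes "norm x < 1" "y \<noteq> 0"
  defines "c \<equiv> 1 - (norm x)\<^sup>2" and "p \<equiv> x \<bullet> y"
  defines "r \<equiv> sqrt (c * (y \<bullet> y) + p^2)"
  shows "((\<lambda>t. berwald x (y + t *\<^sub>R v)) has_real_derivative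
     ((r+p)*((r-p)*(c*(y \<bullet> v) + p*(x \<bullet> v)) + 2*r^2*(x \<bullet> v))/(c^2*r^3))) (at 0)"
proof -
  define m where "m = y \<bullet> v"
  define w where "w = v \<bullet> v"
  define q where "q = x \<bullet> v"
  define g where "g t = c * (y \<bullet> y + 2*t*m + t^2*w) + (p + t*q)^2" for t
  have c: "c > 0" using assms(1) unfolding c_def by (simp add: abs_square_less_1)
  have rgt: "r > \<bar>p\<bar>" using r_gt[OF assms(1,2)] unfolding r_def c_def p_def
    by (simp add: power2_norm_eq_inner)
  have r0: "r > 0" using rgt by linarith
  have g0: "g 0 = r^2" unfolding g_def r_def using c
    by (simp add: inner_ge_zero)
  have eq: "berwald x (y + t *\<^sub>R v) = (sqrt (g t) + (p + t*q))^2 / (c^2 * sqrt (g t))" for t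
  proof -
    have "(norm (y + t *\<^sub>R v))\<^sup>2 = y \<bullet> y + 2*t*m + t^2*w"
      unfolding power2_norm_eq_inner m_def w_def
      by (simp add: inner_add_left inner_add_right inner_commute power2_eq_square algebra_simps)
    moreover have "x \<bullet> (y + t *\<^sub>R v) = p + t*q" unfolding p_def q_def by (simp add: inner_add_right)
    ultimately show ?thesis unfolding berwald_def Let_def g_def c_def by simp
  qed
  have dg: "(g has_real_derivative (2*c*m + 2*p*q)) (at 0)"
    unfolding g_def by (auto intro!: derivative_eq_intros)
  have dR: "((\<lambda>t. sqrt (g t)) has_real_derivative (2*c*m + 2*p*q) / (2 * r)) (at 0)"
  proof -
    have "g 0 > 0" using g0 r0 by simp
    from DERIV_real_sqrt[OF this] have "(sqrt has_real_derivative inverse (sqrt (g 0)) / 2) (at (g 0))" .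
    from DERIV_chain2[OF this dg] show ?thesis using g0 r0 by (simp add: field_simps)
  qed
  have dP: "((\<lambda>t. p + t*q) has_real_derivative q) (at 0)"
    by (auto intro!: derivative_eq_intros)
  have dS: "((\<lambda>t. sqrt (g t) + (p + t*q)) has_real_derivative (2*c*m + 2*p*q) / (2 * r) + q) (at 0)"
    by (rule DERIV_add[OF dR dP])
  have dN: "((\<lambda>t. (sqrt (g t) + (p + t*q)) * (sqrt (g t) + (p + t*q))) has_real_derivative
      ((2*c*m + 2*p*q) / (2 * r) + q) * (sqrt (g 0) + (p + 0*q)) + ((2*c*m + 2*p*q) / (2 * r) + q) * (sqrt (g 0) + (p + 0*q))) (at 0)"
    by (rule DERIV_mult[OF dS dS])
  have dD: "((\<lambda>t. c^2 * sqrt (g t)) has_real_derivative c^2 * ((2*c*m + 2*p*q) / (2 * r))) (at 0)"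
    by (rule DERIV_cmult[OF dR])
  have sg: "sqrt (g 0) = r" using g0 r0 by simp
  have "c^2 * sqrt (g 0) \<noteq> 0" using sg r0 c by simp
  from DERIV_divide[OF dN dD this]
  have "((\<lambda>t. (sqrt (g t) + (p + t*q)) * (sqrt (g t) + (p + t*q)) / (c^2 * sqrt (g t))) has_real_derivative
     ((((2*c*m + 2*p*q) / (2 * r) + q) * (sqrt (g 0) + (p + 0*q)) + ((2*c*m + 2*p*q) / (2 * r) + q) * (sqrt (g 0) + (p + 0*q))) * (c^2 * sqrt (g 0))
       - (sqrt (g 0) + (p + 0*q)) * (sqrt (g 0) + (p + 0*q)) * (c^2 * ((2*c*m + 2*p*q) / (2 * r))))
      / (c^2 * sqrt (g 0) * (c^2 * sqrt (g 0)))) (at 0)" .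
  moreover have "((((2*c*m + 2*p*q) / (2 * r) + q) * (sqrt (g 0) + (p + 0*q)) + ((2*c*m + 2*p*q) / (2 * r) + q) * (sqrt (g 0) + (p + 0*q))) * (c^2 * sqrt (g 0))
       - (sqrt (g 0) + (p + 0*q)) * (sqrt (g 0) + (p + 0*q)) * (c^2 * ((2*c*m + 2*p*q) / (2 * r))))
      / (c^2 * sqrt (g 0) * (c^2 * sqrt (g 0))) = (r+p)*((r-p)*(c*m + p*q) + 2*r^2*q)/(c^2*r^3)"
    unfolding sg using r0 c by (simp add: field_simps power2_eq_square power3_eq_cube)
  ultimately have "((\<lambda>t. (sqrt (g t) + (p + t*q)) * (sqrt (g t) + (p + t*q)) / (c^2 * sqrt (g t))) has_real_derivative
     ((r+p)*((r-p)*(c*m + p*q) + 2*r^2*q)/(c^2*r^3))) (at 0)" by simp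
  moreover have "(\<lambda>t. (sqrt (g t) + (p + t*q)) * (sqrt (g t) + (p + t*q)) / (c^2 * sqrt (g t)))
     = (\<lambda>t. (sqrt (g t) + (p + t*q))^2 / (c^2 * sqrt (g t)))"
    by (simp only: power2_eq_square[of "sqrt (g _) + _"])
  ultimately have "((\<lambda>t. (sqrt (g t) + (p + t*q))^2 / (c^2 * sqrt (g t))) has_real_derivative
     ((r+p)*((r-p)*(c*m + p*q) + 2*r^2*q)/(c^2*r^3))) (at 0)" by simp
  then show ?thesis unfolding eq m_def q_def .
qed

lemma homog:
  fixes s A b B u :: real
  shows "16 * s * (1 - s)^2 * ((1 - s) * (u^2*A) + (u*b)^2) * (u*B)^4
       + 8 * ((10 * s - 1) * (1 - s) * (u^2*A) * (u*b) + (9 * s - 1) * (u*b)^3) * (u*B)^3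
       + ((1 - 20 * s - 8 * s^2) * (u^2*A)^2 + 6 * (6 * s - 5) * (u^2*A) * (u*b)^2 - 27 * (u*b)^4) * (u*B)^2
       + 12 * (u^2*A)^2 * (u*b) * (u*B) - (u^2*A)^3 = u^6 * (16 * s * (1 - s)^2 * ((1 - s) * A + b^2) * B^4
       + 8 * ((10 * s - 1) * (1 - s) * A * b + (9 * s - 1) * b^3) * B^3
       + ((1 - 20 * s - 8 * s^2) * A^2 + 6 * (6 * s - 5) * A * b^2 - 27 * b^4) * B^2
       + 12 * A^2 * b * B - A^3)"
  by algebra

lemma final_alg:
  fixes r p s B zz xz A b :: real
  assumes r: "r > 0" "r - p > 0" "r + p > 0"
    and s: "s = 1 + p^2 - r^2"
    and zz: "zz = B^2 * ((1/r^3)^2 + 2*(1/r^3)*((p*r - p^2 + 2*r^2) / ((r-p)^2 * (r+p) * r^3))*p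
                 + ((p*r - p^2 + 2*r^2) / ((r-p)^2 * (r+p) * r^3))^2 * s)"
    and xz: "xz = B * ((1/r^3)*p + ((p*r - p^2 + 2*r^2) / ((r-p)^2 * (r+p) * r^3)) * s)"
    and A: "A = (1-s)^3 * (zz - xz^2)" and b: "b = (1-s)^2 * xz"
  shows "16 * s * (1 - s)^2 * ((1 - s) * A + b^2) * B^4
       + 8 * ((10 * s - 1) * (1 - s) * A * b + (9 * s - 1) * b^3) * B^3
       + ((1 - 20 * s - 8 * s^2) * A^2 + 6 * (6 * s - 5) * A * b^2 - 27 * b^4) * B^2
       + 12 * A^2 * b * B - A^3 = 0"
proof -
  define n1 where "n1 = (r-p)^2 * (r+p)"
  define n2 where "n2 = p*r - p^2 + 2*r^2"
  define qD where "qD = (r-p)^2 * (r+p) * r^3"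
  define qX where "qX = n1*p + n2* s"
  define qZ where "qZ = n1^2 + 2*n1*n2*p + n2^2* s"
  define u where "u = B / qD"
  have D0: "qD \<noteq> 0" using r unfolding qD_def by auto
  have n10: "n1 \<noteq> 0" using r unfolding n1_def by auto
  have qDn: "qD = n1 * r^3" unfolding qD_def n1_def by simp
  have a1: "1/r^3 = n1 / qD" unfolding qDn using n10 by simp
  have a2: "(p*r - p^2 + 2*r^2) / ((r-p)^2 * (r+p) * r^3) = n2 / qD" unfolding n2_def qD_def by simp
  have BuD: "B = u * qD" using D0 unfolding u_def by simp
  have xz': "xz = u * qX" unfolding xz a1 a2 qX_def u_def using D0 by (simp add: field_simps)
  have zz': "zz = u^2 * qZ" unfolding zz a1 a2 qZ_def u_def using D0 by (simp add: field_simps power2_eq_square)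
  have A': "A = u^2 * ((1-s)^3 * (qZ - qX^2))" unfolding A zz' xz' by (simp add: algebra_simps power2_eq_square)
  have b': "b = u * ((1-s)^2 * qX)" unfolding b xz' by simp
  have "16 * s * (1 - s)^2 * ((1 - s) * ((1-s)^3 * (qZ - qX^2)) + ((1-s)^2 * qX)^2) * qD^4
       + 8 * ((10 * s - 1) * (1 - s) * ((1-s)^3 * (qZ - qX^2)) * ((1-s)^2 * qX) + (9 * s - 1) * ((1-s)^2 * qX)^3) * qD^3
       + ((1 - 20 * s - 8 * s^2) * ((1-s)^3 * (qZ - qX^2))^2 + 6 * (6 * s - 5) * ((1-s)^3 * (qZ - qX^2)) * ((1-s)^2 * qX)^2 - 27 * ((1-s)^2 * qX)^4) * qD^2
       + 12 * ((1-s)^3 * (qZ - qX^2))^2 * ((1-s)^2 * qX) * qD - ((1-s)^3 * (qZ - qX^2))^3 = 0"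
    unfolding s qX_def qZ_def n1_def n2_def qD_def by algebra
  then show ?thesis unfolding A' b' BuD homog by simp
qed


lemma Ecoef:
  fixes r p u w :: real
  assumes "r - p > 0" "r + p > 0" "r > 0"
  shows "(r+p)*((r-p)*(((r-p)*(r+p))*u + p*w) + 2*r^2*w)/(((r-p)*(r+p))^2*r^3)
     = 1/r^3*u + (p*r - p^2 + 2*r^2)/((r-p)^2*(r+p)*r^3)*w"
proof -
  define a where "a = r - p"
  define b where "b = r + p"
  have a: "a \<noteq> 0" "b \<noteq> 0" "r \<noteq> 0" using assms unfolding a_def b_def by auto
  have "(r+p)*((r-p)*(((r-p)*(r+p))*u + p*w) + 2*r^2*w)/(((r-p)*(r+p))^2*r^3)
      = b*(a*((a*b)*u + p*w) + 2*r^2*w)/((a*b)^2*r^3)" unfolding a_def b_def ..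
  also have "\<dots> = 1/r^3*u + (p*r - p^2 + 2*r^2)/(a^2*b*r^3)*w"
    using a unfolding a_def[symmetric] b_def[symmetric]
    apply (simp add: field_simps power2_eq_square power3_eq_cube)
    unfolding a_def b_def by algebra
  finally show ?thesis unfolding a_def b_def .
qed



theorem lemma3p4:
  fixes x \<xi> :: "real^'n"
  assumes "x \<in> ball 0 1"
  defines "B \<equiv> co_metric berwald x \<xi>"
      and "A \<equiv> alpha_star_sq x \<xi>"
      and "b \<equiv> beta_star x \<xi>"
      and "s \<equiv> (norm x)\<^sup>2"
  shows "16 * s * (1 - s)^2 * ((1 - s) * A + b^2) * B^4
       + 8 * ((10 * s - 1) * (1 - s) * A * b + (9 * s - 1) * b^3) * B^3
       + ((1 - 20 * s - 8 * s^2) * A^2 + 6 * (6 * s - 5) * A * b^2 - 27 * b^4) * B^2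
       + 12 * A^2 * b * B - A^3 = 0"
proof -
  have nx: "norm x < 1" using assms(1) by simp
  define g where "g y = (\<xi> \<bullet> y) / berwald x y" for y
  define S where "S = sphere (0::real^'n) 1"
  have cS: "compact S" unfolding S_def by simp
  obtain k :: 'n where True by simp
  have "axis k (1::real) \<in> S" unfolding S_def by (simp add: norm_axis_1)
  then have neS: "S \<noteq> {}" by auto
  have z: "0 \<notin> S" unfolding S_def by simp
  have contg: "continuous_on S g" unfolding g_def
  proof (rule continuous_on_divide)
    show "continuous_on S ((\<bullet>) \<xi>)" by (intro continuous_intros)
    show "continuous_on S (berwald x)" by (rule berwald_cont[OF nx z])
    show "\<forall>y\<in>S. berwald x y \<noteq> 0" using berwald_pos[OF nx] z by (metis less_irrefl)
  qed
  obtain y0 where y0S: "y0 \<in> S" and max: "\<And>y. y \<in> S \<Longrightarrow> g y \<le> g y0"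
    using continuous_attains_sup[OF cS neS contg] by blast
  have ny0: "norm y0 = 1" using y0S unfolding S_def by simp
  have y00: "y0 \<noteq> 0" using ny0 by auto
  have le: "g y \<le> g y0" if "y \<noteq> 0" for y
  proof -
    define n where "n = norm y"
    have n0: "n > 0" using that unfolding n_def by simp
    have "g ((1/n) *\<^sub>R y) = g y" unfolding g_def using berwald_homog[of "1/n" x y] n0
      by simp
    moreover have "(1/n) *\<^sub>R y \<in> S" unfolding S_def n_def using n0 n_def by simp
    ultimately show ?thesis using max by metis
  qed
  have Bg: "B = g y0"
    unfolding B_def co_metric_def g_def[symmetric]
  proof (rule antisym)
    show "(SUP y\<in>UNIV - {0}. g y) \<le> g y0" by (rule cSUP_least) (use le in auto)
    show "g y0 \<le> (SUP y\<in>UNIV - {0}. g y)"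
      by (rule cSUP_upper) (use y00 le in \<open>auto intro!: bdd_aboveI2\<close>)
  qed
  have F0: "berwald x y0 > 0" by (rule berwald_pos[OF nx y00])
  have eq0: "\<xi> \<bullet> y0 = B * berwald x y0" using F0 unfolding Bg g_def by simp
  have ineq: "\<xi> \<bullet> y \<le> B * berwald x y" if "y \<noteq> 0" for y
  proof -
    have "berwald x y > 0" by (rule berwald_pos[OF nx that])
    moreover have "(\<xi> \<bullet> y) / berwald x y \<le> B" using le[OF that] Bg unfolding g_def by simp
    ultimately show ?thesis by (simp add: divide_le_eq mult.commute)
  qed
  define c where "c = 1 - (norm x)\<^sup>2"
  define p where "p = x \<bullet> y0"
  define r where "r = sqrt (c * (y0 \<bullet> y0) + p^2)"
  define E where "E v = (r+p)*((r-p)*(c*(y0 \<bullet> v) + p*(x \<bullet> v)) + 2*r^2*(x \<bullet> v))/(c^2*r^3)" for v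
  have foc: "\<xi> \<bullet> v = B * E v" for v
  proof -
    define \<phi> where "\<phi> t = B * berwald x (y0 + t *\<^sub>R v) - (\<xi> \<bullet> y0 + t * (\<xi> \<bullet> v))" for t
    have d1: "((\<lambda>t. berwald x (y0 + t *\<^sub>R v)) has_real_derivative E v) (at 0)"
      using berwald_deriv[OF nx y00, of v] unfolding E_def r_def p_def c_def .
    have d2: "((\<lambda>t. \<xi> \<bullet> y0 + t * (\<xi> \<bullet> v)) has_real_derivative (\<xi> \<bullet> v)) (at 0)"
      by (auto intro!: derivative_eq_intros)
    have d: "(\<phi> has_real_derivative B * E v - \<xi> \<bullet> v) (at 0)"
      unfolding \<phi>_def by (rule DERIV_diff[OF DERIV_cmult[OF d1] d2])
    have nv1: "0 < norm v + 1" by (simp add: add_nonneg_pos)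
    have dpos: "0 < 1 / (norm v + 1)" using nv1 by simp
    have "\<forall>t. \<bar>0 - t\<bar> < 1 / (norm v + 1) \<longrightarrow> \<phi> 0 \<le> \<phi> t"
    proof (intro allI impI)
      fix t :: real assume t: "\<bar>0 - t\<bar> < 1 / (norm v + 1)"
      have "norm (t *\<^sub>R v) = \<bar>t\<bar> * norm v" by simp
      also have "\<dots> \<le> \<bar>t\<bar> * (norm v + 1)" by (simp add: mult_left_mono)
      also have "\<dots> < 1" using t nv1 by (simp add: field_simps)
      finally have "norm (t *\<^sub>R v) < 1" .
      then have "y0 + t *\<^sub>R v \<noteq> 0" using ny0
        by (metis add.inverse_inverse add_eq_0_iff2 norm_minus_cancel less_irrefl)
      from ineq[OF this] have "\<xi> \<bullet> (y0 + t *\<^sub>R v) \<le> B * berwald x (y0 + t *\<^sub>R v)" .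
      then have "\<phi> t \<ge> 0" unfolding \<phi>_def by (simp add: inner_add_right)
      moreover have "\<phi> 0 = 0" unfolding \<phi>_def using eq0 by simp
      ultimately show "\<phi> 0 \<le> \<phi> t" by simp
    qed
    from DERIV_local_min[OF d dpos this] show ?thesis by simp
  qed
  have c0: "c > 0" using nx unfolding c_def by (simp add: abs_square_less_1)
  have yy: "y0 \<bullet> y0 = 1" using ny0 by (simp add: power2_norm_eq_inner[symmetric])
  have rgt: "r > \<bar>p\<bar>" using r_gt[OF nx y00] unfolding r_def c_def p_def
    by (simp add: power2_norm_eq_inner)
  have r0: "r > 0" "r - p > 0" "r + p > 0" using rgt by linarith+
  have r2: "r^2 = c + p^2" unfolding r_def yy using c0 by (simp add: add_pos_nonneg)
  have cr: "c = (r - p) * (r + p)" using r2 by (simp add: algebra_simps power2_eq_square)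
  define a1 where "a1 = 1 / r^3"
  define a2 where "a2 = (p*r - p^2 + 2*r^2) / ((r-p)^2 * (r+p) * r^3)"
  define G where "G = a1 *\<^sub>R y0 + a2 *\<^sub>R x"
  have EG: "E v = G \<bullet> v" for v
  proof -
    have "E v = a1 * (y0 \<bullet> v) + a2 * (x \<bullet> v)"
      unfolding E_def a1_def a2_def cr using Ecoef[OF r0(2,3,1)] by simp
    then show ?thesis unfolding G_def by (simp add: inner_add_left)
  qed
  have xiG: "\<xi> = B *\<^sub>R G"
  proof -
    have "\<xi> \<bullet> v = (B *\<^sub>R G) \<bullet> v" for v using foc[of v] EG[of v] by simp
    then have "(\<xi> - B *\<^sub>R G) \<bullet> (\<xi> - B *\<^sub>R G) = 0" by (simp add: inner_diff_left)
    then show ?thesis by simp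
  qed
  have xx: "x \<bullet> x = s" unfolding s_def by (simp add: power2_norm_eq_inner)
  have zz: "\<xi> \<bullet> \<xi> = B^2 * (a1^2 + 2*a1*a2*p + a2^2 * s)"
    unfolding xiG G_def using yy xx unfolding p_def
    by (simp add: inner_add_left inner_add_right inner_commute power2_eq_square algebra_simps)
  have xz: "x \<bullet> \<xi> = B * (a1*p + a2 * s)"
    unfolding xiG G_def using xx unfolding p_def
    by (simp add: inner_add_left inner_add_right inner_commute algebra_simps)
  have sr: "s = 1 + p^2 - r^2" using r2 unfolding c_def s_def by simp
  have AA: "A = (1-s)^3 * (\<xi> \<bullet> \<xi> - (x \<bullet> \<xi>)^2)" unfolding A_def alpha_eq s_def ..
  have bb: "b = (1-s)^2 * (x \<bullet> \<xi>)" unfolding b_def beta_eq s_def ..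
  show ?thesis
    by (rule final_alg[OF r0 sr zz[unfolded a1_def a2_def] xz[unfolded a1_def a2_def] AA bb])
qed

end
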